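(* Let $M$, $M'$ be matroids on ground sets $E$, $E'$ with $E\cap E'=\{p\}$. (a) If $p$ is a coloop of neither $M$ nor $M'$, and every two bases of $M$ intersect or every two bases of $M'$ intersect, then every two bases of $\operatorname{Ser}(M,M')$ intersect. (b) If $p$ is a loop of neither $M$ nor $M'$, and every two bases of $M$ intersect in at least two elements or every two bases of $M'$ intersect in at least two elements, then every two bases of $\operatorname{Par}(M,M')$ intersect.
   Context: The series connection $\operatorname{Ser}(M,M')$ is the matroid on $E\cup E'$ whose bases are the sets $B\cup B'$ with $B$ a basis of $M$, $B'$ a basis of $M'$, $B\cap B'=\varnothing$. The parallel connection $\operatorname{Par}(M,M')$ is the matroid on $E\cup E'$ whose bases are the sets $B\cup B'$ with $B,B'$ bases of $M,M'$ and $B\cap B'=\{p\}$, together with the sets $(B\cup B')\setminus\{p\}$ with $B,B'$ bases of $M,M'$ and $p\in(B\setminus B')\cup(B'\setminus B)$. *)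

theory Defs
  imports Main
begin

definition matroid_bases :: "'a set \<Rightarrow> 'a set set \<Rightarrow> bool" where
  "matroid_bases E \<B> \<longleftrightarrow> finite E \<and> \<B> \<noteq> {} \<and> (\<forall>B\<in>\<B>. B \<subseteq> E) \<and>
     (\<forall>B1\<in>\<B>. \<forall>B2\<in>\<B>. \<forall>x\<in>B1 - B2. \<exists>y\<in>B2 - B1. insert y (B1 - {x}) \<in> \<B>)"

definition is_loop :: "'a set \<Rightarrow> 'a set set \<Rightarrow> 'a \<Rightarrow> bool" where
  "is_loop E \<B> e \<longleftrightarrow> e \<in> E \<and> (\<forall>B\<in>\<B>. e \<notin> B)"

definition is_coloop :: "'a set \<Rightarrow> 'a set set \<Rightarrow> 'a \<Rightarrow> bool" where
  "is_coloop E \<B> e \<longleftrightarrow> e \<in> E \<and> (\<forall>B\<in>\<B>. e \<in> B)"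

definition ser_bases :: "'a set set \<Rightarrow> 'a set set \<Rightarrow> 'a set set" where
  "ser_bases \<B> \<B>' = {B \<union> B' | B B'. B \<in> \<B> \<and> B' \<in> \<B>' \<and> B \<inter> B' = {}}"

definition par_bases :: "'a \<Rightarrow> 'a set set \<Rightarrow> 'a set set \<Rightarrow> 'a set set" where
  "par_bases p \<B> \<B>' =
     {B \<union> B' | B B'. B \<in> \<B> \<and> B' \<in> \<B>' \<and> B \<inter> B' = {p}} \<union>
     {(B \<union> B') - {p} | B B'. B \<in> \<B> \<and> B' \<in> \<B>' \<and> p \<in> (B - B') \<union> (B' - B)}"

definition bases_intersect_atleast :: "nat \<Rightarrow> 'a set set \<Rightarrow> bool" where
  "bases_intersect_atleast k \<B> \<longleftrightarrow> (\<forall>X\<in>\<B>. \<forall>Y\<in>\<B>. card (X \<inter> Y) \<ge> k)"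

definition bases_intersect :: "'a set set \<Rightarrow> bool" where
  "bases_intersect \<B> \<longleftrightarrow> (\<forall>X\<in>\<B>. \<forall>Y\<in>\<B>. X \<inter> Y \<noteq> {})"

end

theory Submission
  imports Defs
begin

lemma card2_other:
  assumes "card (A::'a set) \<ge> 2" shows "\<exists>x\<in>A. x \<noteq> p"
proof (rule ccontr)
  assume "\<not> ?thesis"
  then have "A \<subseteq> {p}" by blast
  then have "card A \<le> card {p}" by (intro card_mono) auto
  then show False using assms by simp
qed

lemma ser_part:
  assumes "bases_intersect \<B> \<or> bases_intersect \<B>'"
  shows "bases_intersect (ser_bases \<B> \<B>')"
  unfolding bases_intersect_def
proof (intro ballI)
  fix X Y assume "X \<in> ser_bases \<B> \<B>'" "Y \<in> ser_bases \<B> \<B>'"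
  then obtain B1 B1' B2 B2' where X: "X = B1 \<union> B1'" and Y: "Y = B2 \<union> B2'"
    and b: "B1 \<in> \<B>" "B1' \<in> \<B>'" "B2 \<in> \<B>" "B2' \<in> \<B>'"
    unfolding ser_bases_def by blast
  show "X \<inter> Y \<noteq> {}"
  proof (cases "bases_intersect \<B>")
    case True
    then have "B1 \<inter> B2 \<noteq> {}" using b unfolding bases_intersect_def by blast
    then show ?thesis unfolding X Y by blast
  next
    case False
    then have "bases_intersect \<B>'" using assms by blast
    then have "B1' \<inter> B2' \<noteq> {}" using b unfolding bases_intersect_def by blast
    then show ?thesis unfolding X Y by blast
  qed
qed

lemma par_elem:
  assumes "X \<in> par_bases p \<B> \<B>'"
  obtains B B' where "B \<in> \<B>" "B' \<in> \<B>'" "(B \<union> B') - {p} \<subseteq> X"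
  using assms unfolding par_bases_def by auto
lemma inter2: "bases_intersect_atleast 2 \<B> \<Longrightarrow> B1 \<in> \<B> \<Longrightarrow> B2 \<in> \<B> \<Longrightarrow> B1 - {p} \<subseteq> X \<Longrightarrow> B2 - {p} \<subseteq> Y
  \<Longrightarrow> X \<inter> Y \<noteq> {}"
proof -
  assume a: "bases_intersect_atleast 2 \<B>" "B1 \<in> \<B>" "B2 \<in> \<B>" "B1 - {p} \<subseteq> X" "B2 - {p} \<subseteq> Y"
  have "card (B1 \<inter> B2) \<ge> 2" using a(1-3) unfolding bases_intersect_atleast_def by simp
  then obtain z where "z \<in> B1 \<inter> B2" "z \<noteq> p" using card2_other by metis
  then have "z \<in> X" "z \<in> Y" using a(4,5) by auto
  then show ?thesis by blast
qed
lemma par_part: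
  assumes "bases_intersect_atleast 2 \<B> \<or> bases_intersect_atleast 2 \<B>'"
  shows "bases_intersect (par_bases p \<B> \<B>')"
  unfolding bases_intersect_def
proof (intro ballI)
  fix X Y assume x: "X \<in> par_bases p \<B> \<B>'" and y: "Y \<in> par_bases p \<B> \<B>'"
  obtain B1 B1' where b1: "B1 \<in> \<B>" "B1' \<in> \<B>'" "(B1 \<union> B1') - {p} \<subseteq> X"
    using par_elem[OF x] by metis
  obtain B2 B2' where b2: "B2 \<in> \<B>" "B2' \<in> \<B>'" "(B2 \<union> B2') - {p} \<subseteq> Y"
    using par_elem[OF y] by metis
  have s: "B1 - {p} \<subseteq> X" "B1' - {p} \<subseteq> X" "B2 - {p} \<subseteq> Y" "B2' - {p} \<subseteq> Y"
    using b1(3) b2(3) by auto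
  show "X \<inter> Y \<noteq> {}"
    using assms inter2[of \<B> B1 B2 p X Y] inter2[of \<B>' B1' B2' p X Y] b1 b2 s by metis
qed
theorem lemma6p2:
  fixes E E' :: "'a set" and \<B> \<B>' :: "'a set set" and p :: 'a
  assumes M: "matroid_bases E \<B>" and M': "matroid_bases E' \<B>'"
    and common: "E \<inter> E' = {p}"
  shows "(\<not> is_coloop E \<B> p \<and> \<not> is_coloop E' \<B>' p \<and>
            (bases_intersect \<B> \<or> bases_intersect \<B>')
          \<longrightarrow> bases_intersect (ser_bases \<B> \<B>'))
       \<and> (\<not> is_loop E \<B> p \<and> \<not> is_loop E' \<B>' p \<and>
            (bases_intersect_atleast 2 \<B> \<or> bases_intersect_atleast 2 \<B>')
          \<longrightarrow> bases_intersect (par_bases p \<B> \<B>'))"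
  using ser_part[of \<B> \<B>'] par_part[of \<B> \<B>' p] by simp

end
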